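(* Let $G$ be the final graph of the uncoordinated construction (described in the context) on a set $P\subset\mathbb{R}^d$ of $n$ points with parameter $s>1$, let $\alpha$ be the aspect ratio of $P$, and let $\mathcal{W}=\{(P_i,Q_i)\}_{i=1}^m$ be the corresponding greedy WSPD, i.e. one pair $(B_r(p),B_r(q))$ with $r=|pq|/(2s+2)$ for each edge $pq$ of $G$. Then each point $x\in P$ belongs to $P_i\cup Q_i$ for at most $O(s^d\lg\alpha)$ indices $i$, where the implied constant depends only on $d$.
   Context: Fix $d\ge 1$; $|xy|$ is Euclidean distance; $\lg$ is logarithm base 2; $B_r(p)=\{x\in P:|px|\le r\}$. The aspect ratio is $\alpha=\max_{u,v\in P}|uv|/\min_{u\ne v\in P}|uv|$. Uncoordinated construction: start with the graph $G$ on vertex set $P$ with no edges. Every ordered pair $(p,q)$ of distinct points of $P$ is processed exactly once, in an arbitrary order, one at a time. When $(p,q)$ is processed, the edge $pq$ is added to $G$ unless $G$ currently contains an edge whose endpoints can be labeled $p',q'$ with $|pp'|\le |p'q'|/(2s+2)$ and $|qq'|\le |p'q'|/(2s+2)$. $G$ is the graph after all pairs are processed. *)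

theory Defs
  imports "HOL-Analysis.Analysis"
begin

text \<open>An edge pq is stored as the unordered pair {p,q}.\<close>

definition covered :: "real \<Rightarrow> 'a::metric_space set set \<Rightarrow> 'a \<Rightarrow> 'a \<Rightarrow> bool" where
  "covered s E p q \<longleftrightarrow>
     (\<exists>p' q'. {p', q'} \<in> E \<and> dist p p' \<le> dist p' q' / (2 * s + 2)
                          \<and> dist q q' \<le> dist p' q' / (2 * s + 2))"

definition uncoord_step :: "real \<Rightarrow> 'a::metric_space set set \<Rightarrow> 'a \<times> 'a \<Rightarrow> 'a set set" where
  "uncoord_step s E pq =
     (if covered s E (fst pq) (snd pq) then E else insert {fst pq, snd pq} E)"

definition uncoord_graph :: "real \<Rightarrow> ('a::metric_space \<times> 'a) list \<Rightarrow> 'a set set" where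
  "uncoord_graph s ord = foldl (uncoord_step s) {} ord"

definition valid_order :: "'a set \<Rightarrow> ('a \<times> 'a) list \<Rightarrow> bool" where
  "valid_order P ord \<longleftrightarrow> distinct ord \<and> set ord = {(p, q). p \<in> P \<and> q \<in> P \<and> p \<noteq> q}"

definition ballP :: "'a::metric_space set \<Rightarrow> real \<Rightarrow> 'a \<Rightarrow> 'a set" where
  "ballP P r p = {x \<in> P. dist p x \<le> r}"

definition aspect_ratio :: "'a::metric_space set \<Rightarrow> real" where
  "aspect_ratio P =
     Max {dist u v | u v. u \<in> P \<and> v \<in> P} / Min {dist u v | u v. u \<in> P \<and> v \<in> P \<and> u \<noteq> v}"

definition wspd_count :: "'a::metric_space set \<Rightarrow> real \<Rightarrow> 'a set set \<Rightarrow> 'a \<Rightarrow> nat" where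
  "wspd_count P s G x =
     card {e \<in> G. \<exists>p q. e = {p, q} \<and>
             x \<in> ballP P (dist p q / (2 * s + 2)) p \<union> ballP P (dist p q / (2 * s + 2)) q}"

end

theory Submission
  imports Defs
begin

lemma cell_close:
  fixes y z :: "'a::euclidean_space"
  assumes h: "h > 0" and eq: "\<forall>b\<in>Basis. \<lfloor>(y \<bullet> b)/h\<rfloor> = \<lfloor>(z \<bullet> b)/h\<rfloor>"
  shows "dist y z < real DIM('a) * h"
proof -
  have c: "\<bar>(y - z) \<bullet> b\<bar> < h" if b: "b \<in> Basis" for b
  proof -
    have e: "\<lfloor>(y \<bullet> b)/h\<rfloor> = \<lfloor>(z \<bullet> b)/h\<rfloor>" using eq b by blast
    have e': "real_of_int \<lfloor>(y \<bullet> b)/h\<rfloor> = real_of_int \<lfloor>(z \<bullet> b)/h\<rfloor>" using e by (rule arg_cong)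
    have u: "(y \<bullet> b)/h - (z \<bullet> b)/h < 1" "(z \<bullet> b)/h - (y \<bullet> b)/h < 1"
      using e' of_int_floor_le[of "(y \<bullet> b)/h"] of_int_floor_le[of "(z \<bullet> b)/h"]
        real_of_int_floor_gt_diff_one[of "(y \<bullet> b)/h"] real_of_int_floor_gt_diff_one[of "(z \<bullet> b)/h"]
      by linarith+
    have "(y \<bullet> b - z \<bullet> b)/h < 1" using u(1) by (simp only: diff_divide_distrib)
    then have 1: "y \<bullet> b - z \<bullet> b < h" using h by (simp only: pos_divide_less_eq mult_1)
    have "(z \<bullet> b - y \<bullet> b)/h < 1" using u(2) by (simp only: diff_divide_distrib)
    then have 2: "z \<bullet> b - y \<bullet> b < h" using h by (simp only: pos_divide_less_eq mult_1)
    have "(y - z) \<bullet> b = y \<bullet> b - z \<bullet> b" by (rule inner_diff_left)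
    then show ?thesis using 1 2 by linarith
  qed
  have "dist y z = norm (y - z)" by (simp add: dist_norm)
  also have "\<dots> \<le> (\<Sum>b\<in>Basis. \<bar>(y - z) \<bullet> b\<bar>)" by (rule norm_le_l1)
  also have "\<dots> < (\<Sum>b\<in>(Basis::'a set). h)"
    by (rule sum_strict_mono) (use c in auto)
  also have "\<dots> = real DIM('a) * h" by simp
  finally show ?thesis .
qed

lemma cell_range:
  fixes x y :: "'a::euclidean_space"
  assumes h: "h > 0" and d: "dist x y \<le> R" and b: "b \<in> Basis"
  shows "\<lfloor>(y \<bullet> b)/h\<rfloor> \<in> {\<lfloor>(x \<bullet> b - R)/h\<rfloor> .. \<lfloor>(x \<bullet> b + R)/h\<rfloor>}"
proof -
  have "\<bar>(x - y) \<bullet> b\<bar> \<le> norm (x - y)" by (rule Basis_le_norm[OF b])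
  then have "\<bar>x \<bullet> b - y \<bullet> b\<bar> \<le> R" using d by (simp add: inner_diff_left dist_norm)
  then have "x \<bullet> b - R \<le> y \<bullet> b" "y \<bullet> b \<le> x \<bullet> b + R" by auto
  then have "(x \<bullet> b - R)/h \<le> (y \<bullet> b)/h" "(y \<bullet> b)/h \<le> (x \<bullet> b + R)/h"
    using h by (auto intro: divide_right_mono)
  then show ?thesis by (auto intro: floor_mono)
qed

lemma card_int_range:
  assumes h: "h > 0" and R: "R \<ge> 0"
  shows "real (card {\<lfloor>(c - R)/h\<rfloor> .. \<lfloor>(c + R)/h\<rfloor>}) \<le> 2 * R / h + 2"
proof -
  have "real (card {\<lfloor>(c - R)/h\<rfloor> .. \<lfloor>(c + R)/h\<rfloor>}) = real (nat (\<lfloor>(c + R)/h\<rfloor> - \<lfloor>(c - R)/h\<rfloor> + 1))"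
    by simp
  also have "\<dots> \<le> max 0 (real_of_int (\<lfloor>(c + R)/h\<rfloor> - \<lfloor>(c - R)/h\<rfloor> + 1))" by linarith
  also have "\<dots> \<le> 2 * R / h + 2"
  proof -
    have "real_of_int \<lfloor>(c + R)/h\<rfloor> \<le> (c+R)/h" by (rule of_int_floor_le)
    moreover have "real_of_int \<lfloor>(c - R)/h\<rfloor> > (c-R)/h - 1" by (rule real_of_int_floor_gt_diff_one)
    moreover have "(c+R)/h - (c-R)/h = 2*R/h" using h by (simp add: field_simps)
    ultimately have "real_of_int (\<lfloor>(c + R)/h\<rfloor> - \<lfloor>(c - R)/h\<rfloor> + 1) \<le> 2 * R / h + 2" by linarith
    moreover have "0 \<le> 2 * R / h + 2" using h R by simp
    ultimately show ?thesis by simp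
  qed
  finally show ?thesis .
qed

lemma foldl_inv: "I E \<Longrightarrow> (\<And>a E. a \<in> set xs \<Longrightarrow> I E \<Longrightarrow> I (f E a)) \<Longrightarrow> I (foldl f E xs)"
  by (induction xs arbitrary: E) auto


definition sepE :: "real \<Rightarrow> 'a::metric_space set set \<Rightarrow> bool" where
  "sepE s E \<longleftrightarrow> (\<forall>p1 q1 p2 q2. {p1,q1} \<in> E \<longrightarrow> {p2,q2} \<in> E \<longrightarrow> {p1,q1} \<noteq> {p2,q2} \<longrightarrow>
     \<not> (dist p1 p2 \<le> min (dist p1 q1/(2 * s + 2)) (dist p2 q2/(2 * s + 2)) \<and>
        dist q1 q2 \<le> min (dist p1 q1/(2 * s + 2)) (dist p2 q2/(2 * s + 2))))"

lemma sepD: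
  assumes "sepE s E" "{p1,q1} \<in> E" "{p2,q2} \<in> E" "{p1,q1} \<noteq> {p2,q2}"
  shows "\<not> (dist p1 p2 \<le> min (dist p1 q1/(2 * s + 2)) (dist p2 q2/(2 * s + 2)) \<and>
        dist q1 q2 \<le> min (dist p1 q1/(2 * s + 2)) (dist p2 q2/(2 * s + 2)))"
proof -
  have "{p1,q1} \<in> E \<longrightarrow> {p2,q2} \<in> E \<longrightarrow> {p1,q1} \<noteq> {p2,q2} \<longrightarrow>
     \<not> (dist p1 p2 \<le> min (dist p1 q1/(2 * s + 2)) (dist p2 q2/(2 * s + 2)) \<and>
        dist q1 q2 \<le> min (dist p1 q1/(2 * s + 2)) (dist p2 q2/(2 * s + 2)))"
    using assms(1) unfolding sepE_def by (rule spec[of _ q2, OF spec[of _ p2, OF spec[of _ q1, OF spec[of _ p1]]]])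
  then show ?thesis using assms(2-4) by blast
qed

lemma nc:
  assumes nc: "\<not> covered s E a b" and e1: "{p1,q1} \<in> E" and e2: "{p2,q2} = {a,b}"
  shows "\<not> (dist p1 p2 \<le> dist p1 q1/(2 * s + 2) \<and> dist q1 q2 \<le> dist p1 q1/(2 * s + 2))"
proof
  assume h: "dist p1 p2 \<le> dist p1 q1/(2 * s + 2) \<and> dist q1 q2 \<le> dist p1 q1/(2 * s + 2)"
  from e2 have "(p2 = a \<and> q2 = b) \<or> (p2 = b \<and> q2 = a)" by (auto simp: doubleton_eq_iff)
  then show False
  proof
    assume "p2 = a \<and> q2 = b"
    then have "{p1,q1} \<in> E \<and> dist a p1 \<le> dist p1 q1/(2 * s + 2) \<and> dist b q1 \<le> dist p1 q1/(2 * s + 2)"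
      using e1 h by (simp add: dist_commute)
    then have "covered s E a b" unfolding covered_def by blast
    then show False using nc by simp
  next
    assume "p2 = b \<and> q2 = a"
    moreover have "{q1,p1} \<in> E" using e1 by (simp add: insert_commute)
    ultimately have "{q1,p1} \<in> E \<and> dist a q1 \<le> dist q1 p1/(2 * s + 2) \<and> dist b p1 \<le> dist q1 p1/(2 * s + 2)"
      using h by (simp add: dist_commute)
    then have "covered s E a b" unfolding covered_def by blast
    then show False using nc by simp
  qed
qed

lemma sep_step:
  assumes "sepE s E" shows "sepE s (uncoord_step s E (a,b))"
proof (cases "covered s E a b")
  case True then show ?thesis using assms by (simp add: uncoord_step_def)
next
  case False
  have "sepE s (insert {a,b} E)" unfolding sepE_def
  proof (intro allI impI)
    fix p1 q1 p2 q2
    assume i1: "{p1,q1} \<in> insert {a,b} E" and i2: "{p2,q2} \<in> insert {a,b} E"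
      and ne: "{p1,q1} \<noteq> {p2,q2}"
    let ?r1 = "dist p1 q1/(2 * s + 2)" and ?r2 = "dist p2 q2/(2 * s + 2)"
    show "\<not> (dist p1 p2 \<le> min ?r1 ?r2 \<and> dist q1 q2 \<le> min ?r1 ?r2)"
    proof (cases "{p1,q1} \<in> E")
      case E1: True
      show ?thesis
      proof (cases "{p2,q2} \<in> E")
        case True show ?thesis by (rule sepD[OF assms E1 True ne])
      next
        case False
        then have "{p2,q2} = {a,b}" using i2 by auto
        from nc[OF \<open>\<not> covered s E a b\<close> E1 this] show ?thesis by auto
      qed
    next
      case False
      then have e1: "{p1,q1} = {a,b}" using i1 by auto
      then have E2: "{p2,q2} \<in> E" using i2 ne by auto
      from nc[OF \<open>\<not> covered s E a b\<close> E2 e1] show ?thesis by (auto simp: dist_commute)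
    qed
  qed
  then show ?thesis using False by (simp add: uncoord_step_def)
qed

lemma edges_step:
  assumes "\<forall>e\<in>E. \<exists>a b. e = {a,b} \<and> a \<in> P \<and> b \<in> P \<and> a \<noteq> b" "a \<in> P" "b \<in> P" "a \<noteq> b"
  shows "\<forall>e\<in>uncoord_step s E (a,b). \<exists>a b. e = {a,b} \<and> a \<in> P \<and> b \<in> P \<and> a \<noteq> b"
  using assms by (auto simp: uncoord_step_def)

lemma graph_props:
  assumes "valid_order P ord"
  shows "sepE s (uncoord_graph s ord) \<and>
    (\<forall>e\<in>uncoord_graph s ord. \<exists>a b. e = {a,b} \<and> a \<in> P \<and> b \<in> P \<and> a \<noteq> b)"
  unfolding uncoord_graph_def
proof (rule foldl_inv[where I = "\<lambda>E. sepE s E \<and> (\<forall>e\<in>E. \<exists>a b. e = {a,b} \<and> a \<in> P \<and> b \<in> P \<and> a \<noteq> b)"])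
  show "sepE s {} \<and> (\<forall>e\<in>{}. \<exists>a b. e = {a,b} \<and> a \<in> P \<and> b \<in> P \<and> a \<noteq> b)"
    by (simp add: sepE_def)
next
  fix pq E assume m: "pq \<in> set ord" and I: "sepE s E \<and> (\<forall>e\<in>E. \<exists>a b. e = {a,b} \<and> a \<in> P \<and> b \<in> P \<and> a \<noteq> b)"
  obtain a b where pq: "pq = (a,b)" by (cases pq)
  have "a \<in> P" "b \<in> P" "a \<noteq> b" using m assms pq by (auto simp: valid_order_def)
  then show "sepE s (uncoord_step s E pq) \<and> (\<forall>e\<in>uncoord_step s E pq. \<exists>a b. e = {a,b} \<and> a \<in> P \<and> b \<in> P \<and> a \<noteq> b)"
    using sep_step[of s E a b] edges_step[of E P a b s] I pq by auto
qed

lemma scale: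
  assumes "y \<ge> (1::real)"
  shows "2 ^ nat \<lfloor>log 2 y\<rfloor> \<le> y \<and> y < 2 ^ (nat \<lfloor>log 2 y\<rfloor> + 1)"
proof -
  have l: "log 2 y \<ge> 0" using assms by simp
  let ?k = "nat \<lfloor>log 2 y\<rfloor>"
  have k: "real ?k \<le> log 2 y" "log 2 y < real ?k + 1" using l by linarith+
  have "(2::real) ^ ?k = 2 powr real ?k" by (simp add: powr_realpow)
  also have "\<dots> \<le> 2 powr (log 2 y)" using k by (intro powr_mono) auto
  also have "\<dots> = y" using assms by simp
  finally have 1: "2 ^ ?k \<le> y" .
  have "y = 2 powr (log 2 y)" using assms by simp
  also have "\<dots> < 2 powr (real ?k + 1)" using k by (intro powr_less_mono) auto
  also have "\<dots> = 2 powr real (?k + 1)" by (simp add: add.commute)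
  also have "\<dots> = 2 ^ (?k + 1)" by (rule powr_realpow) simp
  finally show ?thesis using 1 by simp
qed


lemma two_points:
  assumes "finite P" "card P \<ge> 2"
  shows "\<exists>u v. u \<in> P \<and> v \<in> P \<and> u \<noteq> v"
proof (rule ccontr)
  assume "\<not> ?thesis"
  then have "card P \<le> Suc 0" using assms(1) by (subst card_le_Suc0_iff_eq) auto
  then show False using assms(2) by simp
qed

theorem theorem14:
  "\<exists>C::real. \<forall>(P::'a::euclidean_space set) (s::real) ord x.
     finite P \<longrightarrow> card P \<ge> 2 \<longrightarrow> s > 1 \<longrightarrow> valid_order P ord \<longrightarrow> x \<in> P \<longrightarrow>
     real (wspd_count P s (uncoord_graph s ord) x)
       \<le> C * s ^ DIM('a) * (1 + log 2 (aspect_ratio P))"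
proof -
  define D where "D = real DIM('a)"
  have D1: "D \<ge> 1" unfolding D_def using DIM_positive[where 'a='a] by linarith
  show ?thesis
  proof (rule exI[of _ "(6*D)^DIM('a) * (22*D)^DIM('a)"], intro allI impI)
    fix P :: "'a set" and s :: real and ord x
    assume fP: "finite P" and cP: "card P \<ge> 2" and s1: "s > 1" and vo: "valid_order P ord"
      and xP: "x \<in> P"
    define G where "G = uncoord_graph s ord"
    from graph_props[OF vo, of s] have sep: "sepE s G"
      and edg: "\<forall>e\<in>G. \<exists>a b. e = {a,b} \<and> a \<in> P \<and> b \<in> P \<and> a \<noteq> b"
      by (auto simp: G_def)
    define Ds where "Ds = {dist u v |u v. u \<in> P \<and> v \<in> P}"
    define Ds' where "Ds' = {dist u v |u v. u \<in> P \<and> v \<in> P \<and> u \<noteq> v}"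
    define M where "M = Max Ds"
    define m where "m = Min Ds'"
    have "Ds = (\<lambda>(u,v). dist u v) ` (P \<times> P)" by (auto simp: Ds_def)
    then have fDs: "finite Ds" using fP by simp
    have "Ds' \<subseteq> Ds" by (auto simp: Ds_def Ds'_def)
    then have fDs': "finite Ds'" using fDs by (rule finite_subset)
    obtain u0 v0 where uv0: "u0 \<in> P" "v0 \<in> P" "u0 \<noteq> v0" using two_points[OF fP cP] by blast
    have neDs': "Ds' \<noteq> {}" using uv0 by (auto simp: Ds'_def)
    have mle: "m \<le> dist p q" if "p \<in> P" "q \<in> P" "p \<noteq> q" for p q
      unfolding m_def using that fDs' by (intro Min_le) (auto simp: Ds'_def)
    have Mge: "dist p q \<le> M" if "p \<in> P" "q \<in> P" for p q
      unfolding M_def using that fDs by (intro Max_ge) (auto simp: Ds_def)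
    have "m \<in> Ds'" unfolding m_def using fDs' neDs' by (rule Min_in)
    then have m0: "m > 0" by (auto simp: Ds'_def)
    have mM: "m \<le> M" using mle[OF uv0] Mge[OF uv0(1,2)] by linarith
    have asp: "aspect_ratio P = M / m"
      by (simp add: aspect_ratio_def M_def m_def Ds_def Ds'_def)
    have al1: "M / m \<ge> 1" using mM m0 by simp
    define K where "K = nat \<lfloor>log 2 (M/m)\<rfloor>"
    have K_le: "real (K + 1) \<le> 1 + log 2 (aspect_ratio P)"
    proof -
      have "log 2 (M/m) \<ge> 0" using al1 by simp
      then have "real K \<le> log 2 (M/m)" unfolding K_def by linarith
      then show ?thesis using asp by simp
    qed
    define kf where "kf = (\<lambda>(p::'a) q. nat \<lfloor>log 2 (dist p q / m)\<rfloor>)"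
    define hf where "hf = (\<lambda>k::nat. 2^k * m / ((2 * s + 2) * D))"
    define cell where "cell = (\<lambda>h (y::'a). (\<lambda>b\<in>Basis. \<lfloor>(y \<bullet> b)/h\<rfloor>))"
    define Rp where "Rp = (\<lambda>k::nat. 2^(k+1) * m / (2 * s + 2))"
    define Rq where "Rq = (\<lambda>k::nat. 2^(k+1) * m * (2 * s + 3) / (2 * s + 2))"
    define A where "A = (\<lambda>k. PiE Basis (\<lambda>b. {\<lfloor>(x \<bullet> b - Rp k)/hf k\<rfloor>..\<lfloor>(x \<bullet> b + Rp k)/hf k\<rfloor>}))"
    define B where "B = (\<lambda>k. PiE Basis (\<lambda>b. {\<lfloor>(x \<bullet> b - Rq k)/hf k\<rfloor>..\<lfloor>(x \<bullet> b + Rq k)/hf k\<rfloor>}))"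
    define T where "T = (SIGMA k:{0..K}. A k \<times> B k)"
    define S' where "S' = {(p,q). {p,q} \<in> G \<and> p \<in> P \<and> q \<in> P \<and> p \<noteq> q \<and> dist p x \<le> dist p q/(2 * s + 2)}"
    define f where "f = (\<lambda>(p::'a,q::'a). (kf p q, cell (hf (kf p q)) p, cell (hf (kf p q)) q))"
    have hf0: "hf k > 0" for k using m0 s1 D1 by (simp add: hf_def)
    have Dhf: "D * hf k = 2^k * m / (2 * s + 2)" for k using s1 D1 by (simp add: hf_def)
    have scl: "2^kf p q * m \<le> dist p q \<and> dist p q < 2^(kf p q + 1) * m \<and> kf p q \<le> K"
      if "p \<in> P" "q \<in> P" "p \<noteq> q" for p q
    proof -
      have y1: "dist p q / m \<ge> 1" using mle[OF that] m0 by simp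
      have yM: "dist p q / m \<le> M / m" using Mge[OF that(1,2)] m0 by (simp add: divide_right_mono)
      from scale[OF y1] have "2 ^ kf p q \<le> dist p q / m" "dist p q / m < 2 ^ (kf p q + 1)"
        by (auto simp: kf_def)
      then have 1: "2^kf p q * m \<le> dist p q" "dist p q < 2^(kf p q + 1) * m"
        using m0 by (simp_all add: field_simps)
      have "log 2 (dist p q / m) \<le> log 2 (M/m)" using y1 yM by simp
      then have "kf p q \<le> K" unfolding kf_def K_def by (intro nat_mono floor_mono)
      with 1 show ?thesis by simp
    qed
    have fT: "f ` S' \<subseteq> T"
    proof
      fix z assume "z \<in> f ` S'"
      then obtain p q where pq: "(p,q) \<in> S'" and z: "z = f (p,q)" by auto
      have pP: "p \<in> P" "q \<in> P" "p \<noteq> q" and dx: "dist p x \<le> dist p q/(2 * s + 2)"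
        using pq by (auto simp: S'_def)
      define k where "k = kf p q"
      have sk: "2^k * m \<le> dist p q" "dist p q < 2^(k+1) * m" "k \<le> K"
        using scl[OF pP] by (auto simp: k_def)
      have dxp: "dist x p \<le> Rp k"
      proof -
        have "dist p q/(2 * s + 2) \<le> 2^(k+1) * m/(2 * s + 2)"
          using sk s1 by (intro divide_right_mono) auto
        then show ?thesis using dx by (simp add: Rp_def dist_commute)
      qed
      have dxq: "dist x q \<le> Rq k"
      proof -
        have "dist x q \<le> dist x p + dist p q" by (rule dist_triangle)
        also have "\<dots> \<le> dist p q/(2 * s + 2) + dist p q" using dx by (simp add: dist_commute)
        also have "\<dots> = dist p q * (2 * s + 3)/(2 * s + 2)" using s1 by (simp add: field_simps)
        also have "\<dots> \<le> 2^(k+1) * m * (2 * s + 3)/(2 * s + 2)"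
          using sk s1 by (intro divide_right_mono mult_right_mono) auto
        finally show ?thesis by (simp add: Rq_def)
      qed
      have "cell (hf k) p \<in> A k" unfolding cell_def A_def
        by (intro iffD2[OF restrict_PiE_iff] ballI cell_range[OF hf0 dxp])
      moreover have "cell (hf k) q \<in> B k" unfolding cell_def B_def
        by (intro iffD2[OF restrict_PiE_iff] ballI cell_range[OF hf0 dxq])
      moreover have "z = (k, cell (hf k) p, cell (hf k) q)" using z by (simp add: f_def k_def)
      ultimately show "z \<in> T" using sk unfolding T_def by simp
    qed
    have inj: "inj_on f S'"
    proof (rule inj_onI)
      fix z1 z2 assume z1: "z1 \<in> S'" and z2: "z2 \<in> S'" and fe: "f z1 = f z2"
      obtain p1 q1 where z1e: "z1 = (p1,q1)" by (cases z1)
      obtain p2 q2 where z2e: "z2 = (p2,q2)" by (cases z2)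
      have P1: "p1 \<in> P" "q1 \<in> P" "p1 \<noteq> q1" "{p1,q1} \<in> G" using z1 z1e by (auto simp: S'_def)
      have P2: "p2 \<in> P" "q2 \<in> P" "p2 \<noteq> q2" "{p2,q2} \<in> G" using z2 z2e by (auto simp: S'_def)
      have kk: "kf p1 q1 = kf p2 q2" using fe z1e z2e by (simp add: f_def)
      define k where "k = kf p1 q1"
      have ce: "cell (hf k) p1 = cell (hf k) p2" "cell (hf k) q1 = cell (hf k) q2"
        using fe z1e z2e kk by (simp_all add: f_def k_def)
      have close: "dist y1 y2 < 2^k * m / (2 * s + 2)" if "cell (hf k) y1 = cell (hf k) y2" for y1 y2
      proof -
        have "\<forall>b\<in>Basis. \<lfloor>(y1 \<bullet> b)/hf k\<rfloor> = \<lfloor>(y2 \<bullet> b)/hf k\<rfloor>"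
        proof
          fix b :: 'a assume b: "b \<in> Basis"
          have "cell (hf k) y1 b = cell (hf k) y2 b" using that by simp
          then show "\<lfloor>(y1 \<bullet> b)/hf k\<rfloor> = \<lfloor>(y2 \<bullet> b)/hf k\<rfloor>" using b by (simp add: cell_def)
        qed
        from cell_close[OF hf0 this] show ?thesis using Dhf[of k] by (simp add: D_def)
      qed
      have r1: "2^k * m / (2 * s + 2) \<le> dist p1 q1 / (2 * s + 2)"
        using scl[OF P1(1-3)] s1 by (intro divide_right_mono) (auto simp: k_def)
      have r2: "2^k * m / (2 * s + 2) \<le> dist p2 q2 / (2 * s + 2)"
        using scl[OF P2(1-3)] s1 kk by (intro divide_right_mono) (auto simp: k_def)
      have cp: "dist p1 p2 < 2^k * m / (2 * s + 2)" and cq: "dist q1 q2 < 2^k * m / (2 * s + 2)"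
        using close ce by auto
      show "z1 = z2"
      proof (cases "{p1,q1} = {p2,q2}")
        case False
        have "\<not> (dist p1 p2 \<le> min (dist p1 q1/(2 * s + 2)) (dist p2 q2/(2 * s + 2)) \<and>
          dist q1 q2 \<le> min (dist p1 q1/(2 * s + 2)) (dist p2 q2/(2 * s + 2)))"
          by (rule sepD[OF sep P1(4) P2(4) False])
        then show ?thesis using cp cq r1 r2 by (smt (verit))
      next
        case True
        then have "(p1 = p2 \<and> q1 = q2) \<or> (p1 = q2 \<and> q1 = p2)" by (auto simp: doubleton_eq_iff)
        then show ?thesis
        proof
          assume "p1 = p2 \<and> q1 = q2" then show ?thesis using z1e z2e by simp
        next
          assume sw: "p1 = q2 \<and> q1 = p2"
          then have lt: "dist p1 q1 < dist p1 q1 / (2 * s + 2)" using cp r1 by (simp add: dist_commute)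
          have d0: "dist p1 q1 > 0" using P1 by simp
          have ds: "0 < dist p1 q1 * s" using d0 s1 by simp
          have eq: "dist p1 q1 * (2 * s + 2) = 2 * (dist p1 q1 * s) + 2 * dist p1 q1"
            by (simp add: algebra_simps)
          have "dist p1 q1 < dist p1 q1 * (2 * s + 2)" using d0 ds eq by linarith
          then have "dist p1 q1 / (2 * s + 2) < dist p1 q1" using s1 by (simp add: pos_divide_less_eq)
          then show ?thesis using lt by linarith
        qed
      qed
    qed
    have "S' \<subseteq> P \<times> P" unfolding S'_def by blast
    then have fS': "finite S'" by (rule finite_subset) (simp add: fP)
    have fA: "finite (A k)" for k by (simp add: A_def finite_PiE)
    have fB: "finite (B k)" for k by (simp add: B_def finite_PiE)
    have fT': "finite T" unfolding T_def using fA fB by (intro finite_SigmaI finite_cartesian_product) auto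
    have cardA: "real (card (A k)) \<le> (6*D)^DIM('a)" for k
    proof -
      have Rp0: "Rp k \<ge> 0" using m0 s1 by (simp add: Rp_def)
      have e: "Rp k = 2 * D * hf k" using Dhf[of k] by (simp add: Rp_def)
      have q: "2 * Rp k / hf k = 4 * D" using hf0[of k] by (simp add: e)
      have "real (card (A k)) = (\<Prod>b\<in>(Basis::'a set). real (card {\<lfloor>(x \<bullet> b - Rp k)/hf k\<rfloor>..\<lfloor>(x \<bullet> b + Rp k)/hf k\<rfloor>}))"
        by (simp add: A_def card_PiE)
      also have "\<dots> \<le> (\<Prod>b\<in>(Basis::'a set). 6*D)"
      proof (rule prod_mono)
        fix b :: 'a
        have "real (card {\<lfloor>(x \<bullet> b - Rp k)/hf k\<rfloor>..\<lfloor>(x \<bullet> b + Rp k)/hf k\<rfloor>}) \<le> 2 * Rp k / hf k + 2"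
          by (rule card_int_range[OF hf0 Rp0])
        then show "0 \<le> real (card {\<lfloor>(x \<bullet> b - Rp k)/hf k\<rfloor>..\<lfloor>(x \<bullet> b + Rp k)/hf k\<rfloor>}) \<and>
          real (card {\<lfloor>(x \<bullet> b - Rp k)/hf k\<rfloor>..\<lfloor>(x \<bullet> b + Rp k)/hf k\<rfloor>}) \<le> 6 * D"
          using q D1 by simp
      qed
      also have "\<dots> = (6*D)^DIM('a)" by simp
      finally show ?thesis .
    qed
    have cardB: "real (card (B k)) \<le> (22*D)^DIM('a) * s^DIM('a)" for k
    proof -
      have Rq0: "Rq k \<ge> 0" using m0 s1 by (simp add: Rq_def)
      have Ds: "D * s \<ge> D" using mult_left_mono[of 1 s D] D1 s1 by simp
      have "Rq k = 2 * (2 * s + 3) * (2^k * m / (2 * s + 2))"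
        by (simp add: Rq_def power_add mult_ac)
      then have e: "Rq k = 2 * (2 * s + 3) * (D * hf k)" by (simp only: Dhf)
      have q0: "2 * Rq k / hf k = 4 * D * (2 * s + 3)" using hf0[of k] by (simp add: e field_simps)
      have q1: "4 * D * (2 * s + 3) = 8 * (D * s) + 12 * D" "22 * D * s = 22 * (D * s)"
        by (simp_all add: algebra_simps)
      have q: "2 * Rq k / hf k + 2 \<le> 22 * D * s"
        using q0 q1 D1 \<open>D * s \<ge> D\<close> by linarith
      have "real (card (B k)) = (\<Prod>b\<in>(Basis::'a set). real (card {\<lfloor>(x \<bullet> b - Rq k)/hf k\<rfloor>..\<lfloor>(x \<bullet> b + Rq k)/hf k\<rfloor>}))"
        by (simp add: B_def card_PiE)
      also have "\<dots> \<le> (\<Prod>b\<in>(Basis::'a set). 22 * D * s)"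
      proof (rule prod_mono)
        fix b :: 'a
        have "real (card {\<lfloor>(x \<bullet> b - Rq k)/hf k\<rfloor>..\<lfloor>(x \<bullet> b + Rq k)/hf k\<rfloor>}) \<le> 2 * Rq k / hf k + 2"
          by (rule card_int_range[OF hf0 Rq0])
        then show "0 \<le> real (card {\<lfloor>(x \<bullet> b - Rq k)/hf k\<rfloor>..\<lfloor>(x \<bullet> b + Rq k)/hf k\<rfloor>}) \<and>
          real (card {\<lfloor>(x \<bullet> b - Rq k)/hf k\<rfloor>..\<lfloor>(x \<bullet> b + Rq k)/hf k\<rfloor>}) \<le> 22 * D * s"
          using q by simp
      qed
      also have "\<dots> = (22*D)^DIM('a) * s^DIM('a)" by (simp add: power_mult_distrib)
      finally show ?thesis .
    qed
    define X where "X = (6*D)^DIM('a) * (22*D)^DIM('a) * s^DIM('a)"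
    have X0: "X \<ge> 0" using D1 s1 by (simp add: X_def)
    have "real (card T) = (\<Sum>k\<in>{0..K}. real (card (A k)) * real (card (B k)))"
      unfolding T_def using fA fB by (simp add: card_cartesian_product)
    also have "\<dots> \<le> (\<Sum>k\<in>{0..K}. X)"
    proof (rule sum_mono)
      fix k
      show "real (card (A k)) * real (card (B k)) \<le> X"
      proof -
        have "real (card (A k)) * real (card (B k)) \<le> (6*D)^DIM('a) * ((22*D)^DIM('a) * s^DIM('a))"
          by (rule mult_mono[OF cardA cardB]) (use D1 in auto)
        then show ?thesis by (simp add: X_def mult.assoc)
      qed
    qed
    also have "\<dots> = real (K + 1) * X" by simp
    finally have cT: "real (card T) \<le> real (K + 1) * X" .
    define S where "S = {e \<in> G. \<exists>p q. e = {p, q} \<and>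
             x \<in> ballP P (dist p q / (2 * s + 2)) p \<union> ballP P (dist p q / (2 * s + 2)) q}"
    have SS': "S \<subseteq> (\<lambda>(p,q). {p,q}) ` S'"
    proof
      fix e assume "e \<in> S"
      then obtain p q where eG: "e \<in> G" and e: "e = {p,q}"
        and xin: "x \<in> ballP P (dist p q / (2 * s + 2)) p \<union> ballP P (dist p q / (2 * s + 2)) q"
        by (auto simp: S_def)
      obtain a b where ab: "e = {a,b}" "a \<in> P" "b \<in> P" "a \<noteq> b" using edg eG by blast
      have pq: "p \<in> P" "q \<in> P" "p \<noteq> q" using ab e by (auto simp: doubleton_eq_iff)
      show "e \<in> (\<lambda>(p,q). {p,q}) ` S'"
      proof (cases "dist p x \<le> dist p q / (2 * s + 2)")
        case True
        then have "(p,q) \<in> S'" using pq eG e by (simp add: S'_def)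
        then show ?thesis using e by (intro image_eqI[where x="(p,q)"]) auto
      next
        case False
        then have "dist q x \<le> dist q p / (2 * s + 2)" using xin by (auto simp: ballP_def dist_commute)
        moreover have "{q,p} \<in> G" using eG e by (simp add: insert_commute)
        ultimately have "(q,p) \<in> S'" using pq by (simp add: S'_def)
        then show ?thesis using e by (intro image_eqI[where x="(q,p)"]) (auto simp: insert_commute)
      qed
    qed
    have "card S \<le> card ((\<lambda>(p,q). {p,q}) ` S')"
      by (rule card_mono[OF finite_imageI[OF fS'] SS'])
    also have "\<dots> \<le> card S'" by (rule card_image_le[OF fS'])
    also have "\<dots> = card (f ` S')" by (rule card_image[OF inj, symmetric])
    also have "\<dots> \<le> card T" by (rule card_mono[OF fT' fT])
    finally have "real (card S) \<le> real (K + 1) * X" using cT by linarith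
    also have "\<dots> \<le> (1 + log 2 (aspect_ratio P)) * X" using K_le X0 by (rule mult_right_mono)
    also have "\<dots> = (6*D)^DIM('a) * (22*D)^DIM('a) * s ^ DIM('a) * (1 + log 2 (aspect_ratio P))"
      unfolding X_def by (rule mult.commute)
    finally have fin: "real (card S) \<le> (6*D)^DIM('a) * (22*D)^DIM('a) * s ^ DIM('a) * (1 + log 2 (aspect_ratio P))" .
    have "wspd_count P s (uncoord_graph s ord) x = card S"
      unfolding wspd_count_def S_def G_def by (rule refl)
    then show "real (wspd_count P s (uncoord_graph s ord) x)
       \<le> (6*D)^DIM('a) * (22*D)^DIM('a) * s ^ DIM('a) * (1 + log 2 (aspect_ratio P))"
      using fin by simp
  qed
qed

end
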